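(* Let $Z$ be a compact Hausdorff space containing (as a subspace) a homeomorphic copy of the one-point compactification $\Delta^+=\Delta\sqcup\{\infty\}$ of an uncountable discrete space $\Delta$, and let $n\ge 3$ be an integer. Set $X:=Z_{[n]}$, $Y:=Z_{[n]}^{\subseteq}$ and let $\pi:Y\to X$ be the second projection $(z,x)\mapsto x$. Then the unital embedding $\pi^*:C(X)\hookrightarrow C(Y)$, $f\mapsto f\circ\pi$, admits no conditional expectation $C(Y)\to \pi^*C(X)$; in particular it is not a quantum (non-commutative) branched cover.
   Context: $Z_{[n]}:=\{\mathbf z\subseteq Z:\ 1\le|\mathbf z|\le n\}$ carries the quotient topology from $Z^n$ via $(z_i)_i\mapsto\{z_i\}_i$ (equivalently, the Vietoris topology); $Z_{[n]}^{\subseteq}:=\{(z,x)\in Z\times Z_{[n]}:\ z\in x\}$. A conditional expectation for a unital $C^*$-subalgebra $A\le B$ is a norm-one idempotent linear map $E:B\to B$ with range $A$ (equivalently a unital completely positive $A$-bimodule projection onto $A$). A unital embedding $A\le B$ is a quantum branched cover if it admits a conditional expectation $E$ of finite index, i.e. there is $K\ge1$ with $KE(b^*b)\ge b^*b$ for all $b\in B$. *)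

theory Defs
  imports "HOL-Analysis.Analysis"
begin

definition quotient_top :: "'a topology \<Rightarrow> ('a \<Rightarrow> 'b) \<Rightarrow> 'b topology" where
  "quotient_top P q = topology (\<lambda>U. U \<subseteq> q ` topspace P \<and> openin P {x \<in> topspace P. q x \<in> U})"

lemma istopology_quotient:
  "istopology (\<lambda>U. U \<subseteq> q ` topspace P \<and> openin P {x \<in> topspace P. q x \<in> U})"
proof -
  have int: "{x \<in> topspace P. q x \<in> S \<inter> T} = {x \<in> topspace P. q x \<in> S} \<inter> {x \<in> topspace P. q x \<in> T}"
    for S T by auto
  have un: "{x \<in> topspace P. q x \<in> \<Union>K} = (\<Union>U\<in>K. {x \<in> topspace P. q x \<in> U})" for K by auto
  show ?thesis unfolding istopology_def
    apply (intro conjI allI impI)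
       apply blast
      apply (subst int, blast intro: openin_Int)
     apply blast
    apply (subst un, auto intro!: openin_Union)
    done
qed

lemma openin_quotient_top:
  "openin (quotient_top P q) U \<longleftrightarrow> U \<subseteq> q ` topspace P \<and> openin P {x \<in> topspace P. q x \<in> U}"
  unfolding quotient_top_def by (simp add: topology_inverse' istopology_quotient)

text \<open>Z_[n]: nonempty subsets of Z with at most n points, with the quotient topology
  from Z^n via (z_i)_i maps to the set of the z_i.\<close>

definition fin_subsets_top :: "'a topology \<Rightarrow> nat \<Rightarrow> 'a set topology" where
  "fin_subsets_top Z n = quotient_top (product_topology (\<lambda>i. Z) {..<n}) (\<lambda>f. f ` {..<n})"

definition incl_top :: "'a topology \<Rightarrow> nat \<Rightarrow> ('a \<times> 'a set) topology" where
  "incl_top Z n = subtopology (prod_topology Z (fin_subsets_top Z n)) {(z, x). z \<in> x}"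

definition onepoint_discrete :: "'d set \<Rightarrow> 'd option topology" where
  "onepoint_discrete D = topology (\<lambda>U. U \<subseteq> insert None (Some ` D) \<and>
       (None \<in> U \<longrightarrow> finite {d \<in> D. Some d \<notin> U}))"

lemma istopology_onepoint_discrete:
  "istopology (\<lambda>U. U \<subseteq> insert None (Some ` D) \<and> (None \<in> U \<longrightarrow> finite {d \<in> D. Some d \<notin> U}))"
  unfolding istopology_def
proof (rule conjI; intro allI impI)
  fix S T assume S: "S \<subseteq> insert None (Some ` D) \<and> (None \<in> S \<longrightarrow> finite {d \<in> D. Some d \<notin> S})"
    and T: "T \<subseteq> insert None (Some ` D) \<and> (None \<in> T \<longrightarrow> finite {d \<in> D. Some d \<notin> T})"
  have "{d \<in> D. Some d \<notin> S \<inter> T} = {d \<in> D. Some d \<notin> S} \<union> {d \<in> D. Some d \<notin> T}" by auto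
  then show "S \<inter> T \<subseteq> insert None (Some ` D) \<and> (None \<in> S \<inter> T \<longrightarrow> finite {d \<in> D. Some d \<notin> S \<inter> T})"
    using S T by auto
next
  fix K assume K: "\<forall>U\<in>K. U \<subseteq> insert None (Some ` D) \<and> (None \<in> U \<longrightarrow> finite {d \<in> D. Some d \<notin> U})"
  show "\<Union>K \<subseteq> insert None (Some ` D) \<and> (None \<in> \<Union>K \<longrightarrow> finite {d \<in> D. Some d \<notin> \<Union>K})"
  proof (intro conjI impI)
    show "\<Union>K \<subseteq> insert None (Some ` D)" using K by blast
  next
    assume "None \<in> \<Union>K"
    then obtain U where U: "U \<in> K" "None \<in> U" by blast
    then have "finite {d \<in> D. Some d \<notin> U}" using K by blast
    then show "finite {d \<in> D. Some d \<notin> \<Union>K}"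
      by (rule finite_subset[rotated]) (use U in blast)
  qed
qed

text \<open>C(Y): continuous complex-valued functions on the space Y, normalised to 0 off topspace.\<close>

definition cfun :: "'y topology \<Rightarrow> ('y \<Rightarrow> complex) set" where
  "cfun Y = {g. continuous_map Y euclidean g \<and> (\<forall>p. p \<notin> topspace Y \<longrightarrow> g p = 0)}"

definition supnorm :: "'y topology \<Rightarrow> ('y \<Rightarrow> complex) \<Rightarrow> real" where
  "supnorm Y g = Sup ((\<lambda>p. cmod (g p)) ` topspace Y)"

definition pullback_alg :: "'y topology \<Rightarrow> 'x topology \<Rightarrow> ('y \<Rightarrow> 'x) \<Rightarrow> ('y \<Rightarrow> complex) set" where
  "pullback_alg Y X \<pi> = {(\<lambda>p. if p \<in> topspace Y then f (\<pi> p) else 0) | f. f \<in> cfun X}"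

definition cond_exp :: "'y topology \<Rightarrow> ('y \<Rightarrow> complex) set \<Rightarrow> (('y \<Rightarrow> complex) \<Rightarrow> ('y \<Rightarrow> complex)) \<Rightarrow> bool" where
  "cond_exp Y A E \<longleftrightarrow>
     (\<forall>g \<in> cfun Y. \<forall>h \<in> cfun Y. E (\<lambda>p. g p + h p) = (\<lambda>p. E g p + E h p)) \<and>
     (\<forall>g \<in> cfun Y. \<forall>c::complex. E (\<lambda>p. c * g p) = (\<lambda>p. c * E g p)) \<and>
     (\<forall>g \<in> cfun Y. E (E g) = E g) \<and>
     E ` cfun Y = A \<and>
     bdd_above ((\<lambda>g. supnorm Y (E g)) ` {g \<in> cfun Y. supnorm Y g \<le> 1}) \<and>
     Sup ((\<lambda>g. supnorm Y (E g)) ` {g \<in> cfun Y. supnorm Y g \<le> 1}) = 1"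

text \<open>Quantum branched cover: A <= C(Y) admits a conditional expectation of finite index.\<close>

definition quantum_branched_cover :: "'y topology \<Rightarrow> ('y \<Rightarrow> complex) set \<Rightarrow> bool" where
  "quantum_branched_cover Y A \<longleftrightarrow>
     (\<exists>E K. cond_exp Y A E \<and> K \<ge> (1::real) \<and>
        (\<forall>b \<in> cfun Y. \<forall>p \<in> topspace Y.
           let bb = (\<lambda>q. cnj (b q) * b q); d = of_real K * E bb p - bb p
           in Im d = 0 \<and> Re d \<ge> 0))"

end

theory Submission
  imports Defs
begin


lemma topspace_quotient_top: "topspace (quotient_top P q) = q ` topspace P"
proof -
  have "openin (quotient_top P q) (q ` topspace P)"
    unfolding openin_quotient_top by (auto intro: openin_subopen[THEN iffD2])
  moreover have "\<And>U. openin (quotient_top P q) U \<Longrightarrow> U \<subseteq> q ` topspace P"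
    unfolding openin_quotient_top by blast
  ultimately show ?thesis
    by (meson openin_subset openin_topspace subset_antisym)
qed

lemma continuous_map_quotient_q: "continuous_map P (quotient_top P q) q"
  unfolding continuous_map_def topspace_quotient_top openin_quotient_top by auto

lemma continuous_map_from_quotient:
  assumes "continuous_map P T (\<lambda>x. f (q x))"
  shows "continuous_map (quotient_top P q) T f"
  unfolding continuous_map_def topspace_quotient_top
proof (intro conjI allI impI)
  show "f \<in> q ` topspace P \<rightarrow> topspace T" using assms by (auto simp: continuous_map_def)
next
  fix U assume U: "openin T U"
  have "{x \<in> topspace P. q x \<in> {y \<in> q ` topspace P. f y \<in> U}} = {x \<in> topspace P. f (q x) \<in> U}" by auto
  then show "openin (quotient_top P q) {x \<in> q ` topspace P. f x \<in> U}"
    unfolding openin_quotient_top using assms U by (auto simp: continuous_map_def)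
qed


lemma tsX: "topspace (fin_subsets_top Z n) = (\<lambda>f. f ` {..<n}) ` (PiE {..<n} (\<lambda>i. topspace Z))"
  unfolding fin_subsets_top_def topspace_quotient_top by simp

lemma image_in_tsX:
  assumes "\<And>i. i < n \<Longrightarrow> g i \<in> topspace Z"
  shows "g ` {..<n} \<in> topspace (fin_subsets_top Z n)"
proof -
  have "restrict g {..<n} \<in> PiE {..<n} (\<lambda>i. topspace Z)" using assms by auto
  moreover have "restrict g {..<n} ` {..<n} = g ` {..<n}" by auto
  ultimately show ?thesis unfolding tsX by (metis image_eqI)
qed

lemma tsX_D:
  assumes "x \<in> topspace (fin_subsets_top Z n)"
  shows "x \<subseteq> topspace Z" "finite x" "n > 0 \<Longrightarrow> x \<noteq> {}"
  using assms unfolding tsX by auto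

lemma tsY: "topspace (incl_top Z n) = {(z,x). z \<in> topspace Z \<and> x \<in> topspace (fin_subsets_top Z n) \<and> z \<in> x}"
  unfolding incl_top_def by auto

lemma cont_fstY: "continuous_map (incl_top Z n) Z fst"
  unfolding incl_top_def by (intro continuous_map_from_subtopology continuous_map_fst)

lemma cont_sndY: "continuous_map (incl_top Z n) (fin_subsets_top Z n) snd"
  unfolding incl_top_def by (intro continuous_map_from_subtopology continuous_map_snd)

lemma cmult_cont:
  fixes f :: "'a \<Rightarrow> complex"
  shows "continuous_map X euclidean f \<Longrightarrow> continuous_map X euclidean (\<lambda>x. c * f x)"
  by (simp add: continuous_map_atin tendsto_mult)

lemma ofreal_cont:
  "continuous_map X euclideanreal f \<Longrightarrow> continuous_map X euclidean (\<lambda>x. complex_of_real (f x))"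
  by (simp add: continuous_map_atin tendsto_of_real)

lemma cfun_add: "g \<in> cfun Y \<Longrightarrow> h \<in> cfun Y \<Longrightarrow> (\<lambda>p. g p + h p) \<in> cfun Y"
  unfolding cfun_def by (auto intro: continuous_map_add)

lemma cfun_cmult: "g \<in> cfun Y \<Longrightarrow> (\<lambda>p. c * g p) \<in> cfun Y"
  unfolding cfun_def by (auto intro: cmult_cont)

definition liftY :: "('a \<times> 'a set) topology \<Rightarrow> ('a \<Rightarrow> complex) \<Rightarrow> ('a \<times> 'a set \<Rightarrow> complex)" where
  "liftY Y h = (\<lambda>p. if p \<in> topspace Y then h (fst p) else 0)"

definition pull :: "('a \<times> 'a set) topology \<Rightarrow> ('a set \<Rightarrow> complex) \<Rightarrow> ('a \<times> 'a set \<Rightarrow> complex)" where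
  "pull Y f = (\<lambda>p. if p \<in> topspace Y then f (snd p) else 0)"

lemma liftY_cfun:
  assumes "continuous_map Z euclidean h"
  shows "liftY (incl_top Z n) h \<in> cfun (incl_top Z n)"
  unfolding cfun_def liftY_def
proof (intro CollectI conjI allI impI)
  show "continuous_map (incl_top Z n) euclidean (\<lambda>p. if p \<in> topspace (incl_top Z n) then h (fst p) else 0)"
    by (rule continuous_map_eq[OF continuous_map_compose[OF cont_fstY assms]]) auto
qed auto

lemma pull_cfun:
  assumes "f \<in> cfun (fin_subsets_top Z n)"
  shows "pull (incl_top Z n) f \<in> cfun (incl_top Z n)"
  unfolding cfun_def pull_def
proof (intro CollectI conjI allI impI)
  have "continuous_map (fin_subsets_top Z n) euclidean f" using assms by (auto simp: cfun_def)
  then show "continuous_map (incl_top Z n) euclidean (\<lambda>p. if p \<in> topspace (incl_top Z n) then f (snd p) else 0)"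
    by (intro continuous_map_eq[OF continuous_map_compose[OF cont_sndY]]) auto
qed auto

lemma compact_X:
  assumes "compact_space Z"
  shows "compact_space (fin_subsets_top Z n)"
proof -
  have "compact_space (product_topology (\<lambda>i. Z) {..<n})"
    using assms compact_space_product_topology by blast
  then have "compactin (fin_subsets_top Z n) ((\<lambda>f. f ` {..<n}) ` topspace (product_topology (\<lambda>i. Z) {..<n}))"
    unfolding fin_subsets_top_def
    by (metis image_compactin continuous_map_quotient_q compact_space_def)
  then show ?thesis
    by (simp add: compact_space_def fin_subsets_top_def topspace_quotient_top)
qed

lemma cfun_bounded:
  assumes "compact_space X" "f \<in> cfun X"
  shows "\<exists>B. \<forall>x\<in>topspace X. cmod (f x) \<le> B"
proof -
  have "compactin euclidean (f ` topspace X)"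
    using assms by (intro image_compactin) (auto simp: cfun_def compact_space_def)
  then have "bounded (f ` topspace X)" by (simp add: compact_imp_bounded)
  then show ?thesis by (auto simp: bounded_iff)
qed


lemma cont_Min:
  "0 < (k::nat) \<Longrightarrow> (\<And>i. i < k \<Longrightarrow> continuous_map X euclideanreal (\<lambda>x. F x i))
   \<Longrightarrow> continuous_map X euclideanreal (\<lambda>x. Min ((F x) ` {..<k}))"
proof (induction k)
  case 0 then show ?case by simp
next
  case (Suc j)
  show ?case
  proof (cases "j = 0")
    case True
    then have "{..<Suc j} = {0}" by auto
    then show ?thesis using Suc.prems by simp
  next
    case False
    have eq: "(F x) ` {..<Suc j} = insert (F x j) ((F x) ` {..<j})" for x
      by (simp add: lessThan_Suc)
    have "continuous_map X euclideanreal (\<lambda>x. min (F x j) (Min ((F x) ` {..<j})))"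
      using Suc False by (intro continuous_map_real_min) auto
    moreover have "Min (insert (F x j) (F x ` {..<j})) = min (F x j) (Min (F x ` {..<j}))" for x
      using False by (subst Min_insert) auto
    ultimately show ?thesis by (simp add: eq)
  qed
qed

lemma pullback_alg_eq: "pullback_alg Y X snd = {pull Y f | f. f \<in> cfun X}"
  unfolding pullback_alg_def pull_def by simp

locale ce =
  fixes Z :: "'a topology" and n :: nat and E
  assumes compZ: "compact_space Z" and npos: "0 < n"
    and CE: "cond_exp (incl_top Z n) (pullback_alg (incl_top Z n) (fin_subsets_top Z n) snd) E"
begin

abbreviation "X \<equiv> fin_subsets_top Z n"
abbreviation "Y \<equiv> incl_top Z n"

lemma E_add: "g \<in> cfun Y \<Longrightarrow> h \<in> cfun Y \<Longrightarrow> E (\<lambda>p. g p + h p) = (\<lambda>p. E g p + E h p)"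
  using CE unfolding cond_exp_def by blast

lemma E_mult: "g \<in> cfun Y \<Longrightarrow> E (\<lambda>p. c * g p) = (\<lambda>p. c * E g p)"
  using CE unfolding cond_exp_def by blast

lemma E_range: "g \<in> cfun Y \<Longrightarrow> \<exists>f \<in> cfun X. E g = pull Y f"
proof -
  assume g: "g \<in> cfun Y"
  have "E ` cfun Y = pullback_alg Y X snd" using CE unfolding cond_exp_def by blast
  then have "E g \<in> {pull Y f | f. f \<in> cfun X}" using g pullback_alg_eq by blast
  then show ?thesis by blast
qed

lemma E_fix: "f \<in> cfun X \<Longrightarrow> E (pull Y f) = pull Y f"
proof -
  assume f: "f \<in> cfun X"
  have "E ` cfun Y = pullback_alg Y X snd" using CE unfolding cond_exp_def by blast
  then have "pull Y f \<in> E ` cfun Y" using f pullback_alg_eq by blast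
  then obtain g where g: "g \<in> cfun Y" "pull Y f = E g" by blast
  have "E (E g) = E g" using CE g unfolding cond_exp_def by blast
  then show ?thesis using g by simp
qed

lemma E_cfun: "g \<in> cfun Y \<Longrightarrow> E g \<in> cfun Y"
  using E_range pull_cfun by metis

lemma E_bounded: "g \<in> cfun Y \<Longrightarrow> \<exists>B. \<forall>p\<in>topspace Y. cmod (E g p) \<le> B"
proof -
  assume "g \<in> cfun Y"
  then obtain f where f: "f \<in> cfun X" "E g = pull Y f" using E_range by blast
  obtain B where B: "\<forall>x\<in>topspace X. cmod (f x) \<le> B" using cfun_bounded[OF compact_X[OF compZ] f(1)] by blast
  have "\<forall>p\<in>topspace Y. cmod (E g p) \<le> B"
    using B by (auto simp: f(2) pull_def tsY)
  then show ?thesis by blast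
qed

lemma E_norm:
  assumes g: "g \<in> cfun Y" and r: "r > 0" and gb: "\<forall>q\<in>topspace Y. cmod (g q) \<le> r"
    and p: "p \<in> topspace Y"
  shows "cmod (E g p) \<le> r"
proof -
  define g' where "g' = (\<lambda>q. complex_of_real (1/r) * g q)"
  have g'c: "g' \<in> cfun Y" unfolding g'_def by (rule cfun_cmult[OF g])
  have "supnorm Y g' \<le> 1"
    unfolding supnorm_def
  proof (rule cSup_least)
    show "(\<lambda>p. cmod (g' p)) ` topspace Y \<noteq> {}" using p by blast
  next
    fix u assume "u \<in> (\<lambda>p. cmod (g' p)) ` topspace Y"
    then obtain q where q: "q \<in> topspace Y" "u = cmod (g' q)" by blast
    have "cmod (g' q) = cmod (g q) / r" using r by (simp add: g'_def norm_mult norm_divide)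
    also have "\<dots> \<le> 1" using gb q r by simp
    finally show "u \<le> 1" using q by simp
  qed
  then have mem: "supnorm Y (E g') \<in> (\<lambda>g. supnorm Y (E g)) ` {g \<in> cfun Y. supnorm Y g \<le> 1}"
    using g'c by blast
  have "supnorm Y (E g') \<le> 1"
    using CE cSup_upper[OF mem] unfolding cond_exp_def by auto
  moreover
  obtain B where B: "\<forall>q\<in>topspace Y. cmod (E g' q) \<le> B" using E_bounded[OF g'c] by blast
  have "cmod (E g' p) \<le> supnorm Y (E g')"
    unfolding supnorm_def using p B by (intro cSup_upper) (auto simp: bdd_above_def)
  ultimately have "cmod (E g' p) \<le> 1" by simp
  moreover have "E g' = (\<lambda>p. complex_of_real (1/r) * E g p)"
    unfolding g'_def by (rule E_mult[OF g])
  ultimately have "cmod (E g p) / r \<le> 1" using r by (simp add: norm_mult norm_divide)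
  then show ?thesis using r by (simp add: field_simps)
qed


end



context ce begin

lemma E_local:
  assumes h: "continuous_map Z euclidean h" and M: "M > 0" "\<forall>z\<in>topspace Z. cmod (h z) \<le> M"
    and x: "x \<in> topspace X" and d: "\<delta> > 0" and hx: "\<forall>z\<in>x. cmod (h z) < \<delta>" and z0: "z0 \<in> x"
  shows "cmod (E (liftY Y h) (z0, x)) \<le> \<delta>"
proof -
  have xfin: "finite x" and xne: "x \<noteq> {}" and xsub: "x \<subseteq> topspace Z"
    using tsX_D[OF x] npos by auto
  define m where "m = Max ((\<lambda>z. cmod (h z)) ` x)"
  have mlt: "m < \<delta>" unfolding m_def using xfin xne hx by (subst Max_less_iff) auto
  have mge: "\<And>z. z \<in> x \<Longrightarrow> cmod (h z) \<le> m" unfolding m_def using xfin by auto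
  define \<psi> where "\<psi> z = min 1 (max 0 ((\<delta> - cmod (h z)) / (\<delta> - m)))" for z
  have \<psi>c: "continuous_map Z euclideanreal \<psi>"
    unfolding \<psi>_def using mlt
    by (intro continuous_map_real_min continuous_map_real_max continuous_map_real_divide
        continuous_map_diff continuous_map_norm h continuous_map_canonical_const) auto
  have \<psi>1: "\<psi> z = 1" if "z \<in> x" for z
  proof -
    have "(\<delta> - cmod (h z)) / (\<delta> - m) \<ge> 1" using mge[OF that] mlt by simp
    then show ?thesis unfolding \<psi>_def by simp
  qed
  have \<psi>pos: "cmod (h z) < \<delta>" if "\<psi> z > 0" for z
  proof (rule ccontr)
    assume "\<not> cmod (h z) < \<delta>"
    then have "(\<delta> - cmod (h z)) / (\<delta> - m) \<le> 0" using mlt by (simp add: divide_nonpos_pos)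
    then show False using that unfolding \<psi>_def by simp
  qed
  have \<psi>01: "0 \<le> \<psi> z" "\<psi> z \<le> 1" for z unfolding \<psi>_def by auto
  define f where "f x' = (if x' \<in> topspace X then complex_of_real (Min (\<psi> ` x')) else 0)" for x'
  have fc: "f \<in> cfun X"
    unfolding cfun_def
  proof (intro CollectI conjI allI impI)
    show "f p = 0" if "p \<notin> topspace X" for p using that by (simp add: f_def)
  next
    have "continuous_map (product_topology (\<lambda>i. Z) {..<n}) euclidean
            (\<lambda>g. complex_of_real (Min ((\<lambda>i. \<psi> (g i)) ` {..<n})))"
    proof (intro ofreal_cont cont_Min npos)
      fix i :: nat assume "i < n"
      then show "continuous_map (product_topology (\<lambda>i. Z) {..<n}) euclideanreal (\<lambda>g. \<psi> (g i))"
        using continuous_map_compose[OF continuous_map_product_projection[of i "{..<n}" "\<lambda>i. Z"] \<psi>c]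
        by (simp add: o_def)
    qed
    then have "continuous_map (product_topology (\<lambda>i. Z) {..<n}) euclidean (\<lambda>g. f (g ` {..<n}))"
    proof (rule continuous_map_eq)
      fix g assume g: "g \<in> topspace (product_topology (\<lambda>i. Z) {..<n})"
      then have "g ` {..<n} \<in> topspace X" unfolding tsX using g by (intro imageI) simp
      then show "complex_of_real (Min ((\<lambda>i. \<psi> (g i)) ` {..<n})) = f (g ` {..<n})"
        by (simp add: f_def image_image)
    qed
    then show "continuous_map X euclidean f"
      unfolding fin_subsets_top_def by (rule continuous_map_from_quotient)
  qed
  have fx: "f x = 1"
  proof -
    have "\<psi> ` x = {1}" using \<psi>1 xne by auto
    then show ?thesis using x by (simp add: f_def)
  qed
  define G where "G = liftY Y h"
  have Gc: "G \<in> cfun Y" unfolding G_def by (rule liftY_cfun[OF h])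
  define c where "c = E G (z0, x)"
  show ?thesis
  proof (cases "c = 0")
    case True then show ?thesis using d by (simp add: c_def G_def)
  next
    case False
    define t where "t = complex_of_real (1/M) * (cnj c / complex_of_real (cmod c))"
    have tn: "cmod t = 1/M" using False M by (simp add: t_def norm_mult norm_divide)
    define gt where "gt = (\<lambda>p. pull Y f p + t * G p)"
    have gtc: "gt \<in> cfun Y" unfolding gt_def by (intro cfun_add pull_cfun fc cfun_cmult Gc)
    have Egt: "E gt = (\<lambda>p. pull Y f p + t * E G p)"
      unfolding gt_def using E_add[OF pull_cfun[OF fc] cfun_cmult[OF Gc]] E_mult[OF Gc] E_fix[OF fc]
      by simp
    have p0: "(z0, x) \<in> topspace Y" using x z0 xsub by (auto simp: tsY)
    have "t * c = complex_of_real (cmod c / M)"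
    proof -
      have "cnj c * c = complex_of_real (cmod c ^ 2)" using complex_norm_square[of c] by (simp add: mult.commute)
      then show ?thesis using False by (simp add: t_def field_simps power2_eq_square)
    qed
    then have Ep0: "E gt (z0, x) = complex_of_real (1 + cmod c / M)"
      using p0 fx by (simp add: Egt pull_def c_def)
    have bnd: "\<forall>q\<in>topspace Y. cmod (gt q) \<le> 1 + \<delta> / M"
    proof
      fix q assume q: "q \<in> topspace Y"
      obtain z' x' where qe: "q = (z', x')" by (cases q)
      have z': "z' \<in> topspace Z" "x' \<in> topspace X" "z' \<in> x'" using q qe by (auto simp: tsY)
      have x'fin: "finite x'" using tsX_D[OF z'(2)] by simp
      have gtq: "gt q = complex_of_real (Min (\<psi> ` x')) + t * h z'"
        using q qe z' by (simp add: gt_def pull_def G_def liftY_def f_def)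
      have Minle: "Min (\<psi> ` x') \<le> \<psi> z'" using x'fin z'(3) by simp
      have Minge: "0 \<le> Min (\<psi> ` x')" using x'fin z'(3) \<psi>01 by (subst Min_ge_iff) auto
      show "cmod (gt q) \<le> 1 + \<delta> / M"
      proof (cases "Min (\<psi> ` x') > 0")
        case True
        then have "cmod (h z') < \<delta>" using Minle \<psi>pos by simp
        then have "cmod (t * h z') \<le> \<delta> / M" using tn M by (simp add: norm_mult divide_right_mono)
        moreover have "cmod (complex_of_real (Min (\<psi> ` x'))) \<le> 1" using Minle Minge \<psi>01(2)[of z'] by simp
        ultimately show ?thesis unfolding gtq by (meson norm_triangle_ineq add_mono order_trans)
      next
        case False
        then have "Min (\<psi> ` x') = 0" using Minge by simp
        moreover have "cmod (t * h z') \<le> 1"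
        proof -
          have "cmod (t * h z') = cmod (h z') / M" using tn by (simp add: norm_mult)
          also have "\<dots> \<le> 1" using M z'(1) by simp
          finally show ?thesis .
        qed
        ultimately show ?thesis unfolding gtq using d M by (simp add: add_increasing2)
      qed
    qed
    have "cmod (E gt (z0, x)) \<le> 1 + \<delta> / M"
      using E_norm[OF gtc _ bnd p0] d M by (simp add: add_pos_pos)
    moreover have "cmod (complex_of_real (1 + cmod c / M)) = 1 + cmod c / M"
      by (subst norm_of_real) (use M in simp)
    ultimately have "1 + cmod c / M \<le> 1 + \<delta> / M" using Ep0 by metis
    then have "cmod c \<le> \<delta>" using M by (simp add: divide_le_cancel)
    then show ?thesis by (simp add: c_def G_def)
  qed
qed


end



lemma free_triple:
  assumes D: "uncountable D" and F: "\<And>a. a \<in> D \<Longrightarrow> finite (FF a)"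
  shows "\<exists>a b c. a \<in> D \<and> b \<in> D \<and> c \<in> D \<and> a \<noteq> b \<and> a \<noteq> c \<and> b \<noteq> c \<and>
     b \<notin> FF a \<and> c \<notin> FF a \<and> a \<notin> FF b \<and> c \<notin> FF b \<and> a \<notin> FF c \<and> b \<notin> FF c"
proof -
  obtain C where C: "C \<subseteq> D" "countable C" "infinite C"
    using infinite_countable_subset'[OF uncountable_infinite[OF D]] by blast
  define B where "B = C \<union> (\<Union>a\<in>C. FF a)"
  have "countable (\<Union>a\<in>C. FF a)" using C F by (intro countable_UN) (auto intro: countable_finite)
  then have Bc: "countable B" unfolding B_def using C by blast
  have DB: "uncountable (D - B)" using uncountable_minus_countable[OF D Bc] .
  obtain C2 where C2: "C2 \<subseteq> D - B" "countable C2" "infinite C2"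
    using infinite_countable_subset'[OF uncountable_infinite[OF DB]] by blast
  define B2 where "B2 = B \<union> C2 \<union> (\<Union>a\<in>C2. FF a)"
  have "countable (\<Union>a\<in>C2. FF a)" using C2 F by (intro countable_UN) (auto intro: countable_finite)
  then have B2c: "countable B2" unfolding B2_def using C2 Bc by blast
  have "uncountable (D - B2)" using uncountable_minus_countable[OF D B2c] .
  then obtain e where e: "e \<in> D" "e \<notin> B2"
    by (metis Diff_iff countable_empty ex_in_conv)
  have "infinite (C2 - FF e)" using C2 F e by simp
  then obtain c where c: "c \<in> C2" "c \<notin> FF e" by (metis Diff_iff finite.emptyI ex_in_conv)
  have cD: "c \<in> D" using c C2 by auto
  have "infinite (C - (FF c \<union> FF e))" using C F e cD by simp
  then obtain a where a: "a \<in> C" "a \<notin> FF c" "a \<notin> FF e" by (metis Diff_iff UnCI finite.emptyI ex_in_conv)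
  have "a \<in> D" using a C by auto
  moreover have "a \<noteq> c" "a \<noteq> e" "c \<noteq> e" using a c e C2 unfolding B2_def B_def by auto
  moreover have "c \<notin> FF a" "e \<notin> FF a" "e \<notin> FF c" using a c e C2 unfolding B2_def B_def by auto
  ultimately show ?thesis using cD e a c by blast
qed



context ce begin

lemma E_snd:
  assumes g: "g \<in> cfun Y" and "(z, x) \<in> topspace Y" "(z', x) \<in> topspace Y"
  shows "E g (z, x) = E g (z', x)"
proof -
  obtain f where "E g = pull Y f" using E_range[OF g] by blast
  then show ?thesis using assms by (simp add: pull_def)
qed

lemma E_one:
  assumes p: "p \<in> topspace Y"
  shows "E (liftY Y (\<lambda>z. 1)) p = 1"
proof -
  define f where "f x = (if x \<in> topspace X then (1::complex) else 0)" for x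
  have fc: "f \<in> cfun X" unfolding cfun_def
    by (auto simp: f_def intro: continuous_map_eq[OF continuous_map_canonical_const[of _ 1]])
  have "liftY Y (\<lambda>z. 1) = pull Y f"
    by (auto simp: liftY_def pull_def f_def tsY)
  then show ?thesis using E_fix[OF fc] p by (simp add: pull_def f_def tsY split: prod.splits)
qed

lemma liftY_add: "liftY Y (\<lambda>z. h1 z + h2 z) = (\<lambda>p. liftY Y h1 p + liftY Y h2 p)"
  by (auto simp: liftY_def)

lemma liftY_mult: "liftY Y (\<lambda>z. c * h z) = (\<lambda>p. c * liftY Y h p)"
  by (auto simp: liftY_def)

lemma E_lift_add:
  assumes "continuous_map Z euclidean h1" "continuous_map Z euclidean h2"
  shows "E (liftY Y (\<lambda>z. h1 z + h2 z)) p = E (liftY Y h1) p + E (liftY Y h2) p"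
  unfolding liftY_add using E_add[OF liftY_cfun[OF assms(1)] liftY_cfun[OF assms(2)]] by simp

lemma E_lift_mult:
  assumes "continuous_map Z euclidean h"
  shows "E (liftY Y (\<lambda>z. c * h z)) p = c * E (liftY Y h) p"
  unfolding liftY_mult using E_mult[OF liftY_cfun[OF assms(1)]] by simp

lemma E_near:
  assumes g: "g \<in> cfun Y" and n3: "n \<ge> 3" and ua: "ua \<in> topspace Z" and ti: "ti \<in> topspace Z"
    and e: "\<epsilon> > 0"
  shows "\<exists>U V. openin Z U \<and> openin Z V \<and> ti \<in> U \<and> ti \<in> V \<and>
     (\<forall>u\<in>U. \<forall>v\<in>V. cmod (E g (ua, {ua, u, v}) - E g (ua, {ua, ti})) < \<epsilon>)"
proof -
  obtain f where f: "f \<in> cfun X" "E g = pull Y f" using E_range[OF g] by blast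
  define \<zeta> where "\<zeta> p = restrict (\<lambda>i. if i = 0 then ua else if i = 1 then fst p else snd p) {..<n}" for p :: "'a \<times> 'a"
  have img: "\<zeta> p ` {..<n} = {ua, fst p, snd p}" for p
  proof -
    have "\<zeta> p ` {..<n} = (\<lambda>i. if i = 0 then ua else if i = 1 then fst p else snd p) ` {..<n}"
      by (auto simp: \<zeta>_def)
    also have "\<dots> = {ua, fst p, snd p}"
    proof
      show "(\<lambda>i. if i = 0 then ua else if i = 1 then fst p else snd p) ` {..<n} \<subseteq> {ua, fst p, snd p}" by auto
      have i: "(0::nat) \<in> {..<n}" "(1::nat) \<in> {..<n}" "(2::nat) \<in> {..<n}" using n3 by auto
      have "ua \<in> (\<lambda>i. if i = 0 then ua else if i = 1 then fst p else snd p) ` {..<n}"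
        by (rule rev_image_eqI[OF i(1)]) simp
      moreover have "fst p \<in> (\<lambda>i. if i = 0 then ua else if i = 1 then fst p else snd p) ` {..<n}"
        by (rule rev_image_eqI[OF i(2)]) simp
      moreover have "snd p \<in> (\<lambda>i. if i = 0 then ua else if i = 1 then fst p else snd p) ` {..<n}"
        by (rule rev_image_eqI[OF i(3)]) simp
      ultimately show "{ua, fst p, snd p} \<subseteq> (\<lambda>i. if i = 0 then ua else if i = 1 then fst p else snd p) ` {..<n}"
        by blast
    qed
    finally show ?thesis .
  qed
  have \<zeta>c: "continuous_map (prod_topology Z Z) (product_topology (\<lambda>i. Z) {..<n}) \<zeta>"
    unfolding continuous_map_componentwise
  proof (intro conjI ballI)
    show "\<zeta> ` topspace (prod_topology Z Z) \<subseteq> extensional {..<n}" by (auto simp: \<zeta>_def)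
  next
    fix k assume k: "k \<in> {..<n}"
    show "continuous_map (prod_topology Z Z) Z (\<lambda>x. \<zeta> x k)"
    proof (cases "k = 0")
      case True then show ?thesis using k ua by (simp add: \<zeta>_def)
    next
      case False
      then show ?thesis using k by (cases "k = 1") (simp_all add: \<zeta>_def continuous_map_fst continuous_map_snd)
    qed
  qed
  define \<Phi> where "\<Phi> p = f (\<zeta> p ` {..<n})" for p
  have fX: "continuous_map X euclidean f" using f by (simp add: cfun_def)
  have \<Phi>c: "continuous_map (prod_topology Z Z) euclidean \<Phi>"
  proof -
    have "continuous_map (prod_topology Z Z) X (\<lambda>p. \<zeta> p ` {..<n})"
      using continuous_map_compose[OF \<zeta>c continuous_map_quotient_q[of "product_topology (\<lambda>i. Z) {..<n}" "\<lambda>f. f ` {..<n}"]]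
      by (simp add: o_def fin_subsets_top_def)
    then show ?thesis unfolding \<Phi>_def using continuous_map_compose[OF _ fX] by (simp add: o_def)
  qed
  define W where "W = {p \<in> topspace (prod_topology Z Z). \<Phi> p \<in> ball (\<Phi> (ti, ti)) \<epsilon>}"
  have Wo: "openin (prod_topology Z Z) W" unfolding W_def
    by (rule openin_continuous_map_preimage[OF \<Phi>c]) simp
  have tiW: "(ti, ti) \<in> W" unfolding W_def using ti e by simp
  obtain U V where UV: "openin Z U" "openin Z V" "ti \<in> U" "ti \<in> V" "U \<times> V \<subseteq> W"
    using openin_prod_topology_alt[THEN iffD1, OF Wo, rule_format, OF tiW] by blast
  have memX: "{ua, u, v} \<in> topspace X" if "u \<in> topspace Z" "v \<in> topspace Z" for u v
  proof -
    have "\<zeta> (u, v) ` {..<n} \<in> topspace X"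
      by (rule image_in_tsX) (use ua that in \<open>simp add: \<zeta>_def\<close>)
    then show ?thesis using img[of "(u,v)"] by simp
  qed
  have val: "E g (ua, {ua, u, v}) = \<Phi> (u, v)" if "u \<in> topspace Z" "v \<in> topspace Z" for u v
    using memX[OF that] ua img[of "(u,v)"] by (simp add: f(2) pull_def tsY \<Phi>_def)
  have "cmod (E g (ua, {ua, u, v}) - E g (ua, {ua, ti})) < \<epsilon>" if "u \<in> U" "v \<in> V" for u v
  proof -
    have uv: "u \<in> topspace Z" "v \<in> topspace Z" using UV that openin_subset by blast+
    have "(u, v) \<in> W" using UV that by blast
    then have "dist (\<Phi> (ti, ti)) (\<Phi> (u, v)) < \<epsilon>" unfolding W_def by simp
    moreover have "E g (ua, {ua, ti}) = \<Phi> (ti, ti)" using val[OF ti ti] by simp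
    ultimately show ?thesis using val[OF uv] by (simp add: dist_norm norm_minus_commute)
  qed
  then show ?thesis using UV by blast
qed

end



lemma triple_in_tsX:
  assumes "n \<ge> 3" "u \<in> topspace Z" "v \<in> topspace Z" "w \<in> topspace Z"
  shows "{u, v, w} \<in> topspace (fin_subsets_top Z n)"
proof -
  define G where "G i = (if i = 0 then u else if i = (1::nat) then v else w)" for i
  have i: "(0::nat) \<in> {..<n}" "(1::nat) \<in> {..<n}" "(2::nat) \<in> {..<n}" using assms by auto
  have "G ` {..<n} = {u, v, w}"
  proof
    show "G ` {..<n} \<subseteq> {u, v, w}" by (auto simp: G_def)
    have "u \<in> G ` {..<n}" by (rule rev_image_eqI[OF i(1)]) (simp add: G_def)
    moreover have "v \<in> G ` {..<n}" by (rule rev_image_eqI[OF i(2)]) (simp add: G_def)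
    moreover have "w \<in> G ` {..<n}" by (rule rev_image_eqI[OF i(3)]) (simp add: G_def)
    ultimately show "{u, v, w} \<subseteq> G ` {..<n}" by blast
  qed
  moreover have "G ` {..<n} \<in> topspace (fin_subsets_top Z n)"
    by (rule image_in_tsX) (use assms in \<open>simp add: G_def\<close>)
  ultimately show ?thesis by simp
qed

context ce begin

lemma no_CE:
  fixes t :: "'d \<Rightarrow> 'a"
  assumes n3: "n \<ge> 3" and HZ: "Hausdorff_space Z" and D: "uncountable D"
    and ti: "ti \<in> topspace Z" and tD: "\<And>d. d \<in> D \<Longrightarrow> t d \<in> topspace Z"
    and tinj: "inj_on t D" and tne: "\<And>d. d \<in> D \<Longrightarrow> t d \<noteq> ti"
    and cof: "\<And>V. openin Z V \<Longrightarrow> ti \<in> V \<Longrightarrow> finite {d\<in>D. t d \<notin> V}"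
  shows False
proof -
  have NZ: "normal_space Z" using compZ HZ compact_Hausdorff_or_regular_imp_normal_space by blast
  have T1: "t1_space Z" using HZ Hausdorff_imp_t1_space by blast
  have ex1: "\<exists>h. continuous_map Z euclideanreal h \<and> h (t a) = 1 \<and> h ti = 0 \<and> (\<forall>z\<in>topspace Z. 0 \<le> h z \<and> h z \<le> 1)"
    if a: "a \<in> D" for a
  proof -
    have "closedin Z {ti}" "closedin Z {t a}"
      by (rule closedin_t1_singleton[OF T1 ti]) (rule closedin_t1_singleton[OF T1 tD[OF a]])
    moreover have "disjnt {ti} {t a}" using tne[OF a] by auto
    ultimately obtain f where f: "continuous_map Z (top_of_set {0..1::real}) f" "f ` {ti} \<subseteq> {0}" "f ` {t a} \<subseteq> {1}"
      using Urysohn_lemma[OF NZ, of "{ti}" "{t a}" 0 1] by auto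
    have "continuous_map Z euclideanreal f" using f(1) continuous_map_in_subtopology by blast
    moreover have "\<forall>z\<in>topspace Z. 0 \<le> f z \<and> f z \<le> 1"
    proof
      fix z assume "z \<in> topspace Z"
      then have "f z \<in> {0..1}" using continuous_map_image_subset_topspace[OF f(1)] by auto
      then show "0 \<le> f z \<and> f z \<le> 1" by simp
    qed
    ultimately show ?thesis using f by auto
  qed
  have "\<forall>a\<in>D. \<exists>h. continuous_map Z euclideanreal h \<and> h (t a) = 1 \<and> h ti = 0 \<and> (\<forall>z\<in>topspace Z. 0 \<le> h z \<and> h z \<le> 1)"
    using ex1 by blast
  then have "\<exists>hh. \<forall>a\<in>D. continuous_map Z euclideanreal (hh a) \<and> hh a (t a) = 1 \<and> hh a ti = 0
      \<and> (\<forall>z\<in>topspace Z. 0 \<le> hh a z \<and> hh a z \<le> 1)" by (rule bchoice)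
  then obtain hh where hh0: "\<forall>a\<in>D. continuous_map Z euclideanreal (hh a) \<and> hh a (t a) = 1 \<and> hh a ti = 0
      \<and> (\<forall>z\<in>topspace Z. 0 \<le> hh a z \<and> hh a z \<le> 1)" by (elim exE)
  have hh: "continuous_map Z euclideanreal (hh a) \<and> hh a (t a) = 1 \<and> hh a ti = 0
      \<and> (\<forall>z\<in>topspace Z. 0 \<le> hh a z \<and> hh a z \<le> 1)" if "a \<in> D" for a
    using hh0 that by blast
  have hb: "0 \<le> hh a z \<and> hh a z \<le> 1" if "a \<in> D" "z \<in> topspace Z" for a z
    using hh[OF that(1)] that(2) by blast
  define H where "H a = (\<lambda>z. complex_of_real (hh a z))" for a
  have Hc: "continuous_map Z euclidean (H a)" if "a \<in> D" for a
    unfolding H_def using hh[OF that] by (intro ofreal_cont) auto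
  define \<epsilon> :: real where "\<epsilon> = 1/100"
  define p where "p a = E (liftY Y (H a)) (t a, {t a, ti})" for a
  have ex2: "\<exists>F. finite F \<and> (\<forall>b\<in>D-F. \<forall>c\<in>D-F. cmod (E (liftY Y (H a)) (t a, {t a, t b, t c}) - p a) < \<epsilon>
          \<and> \<bar>hh a (t b)\<bar> < \<epsilon>)" if a: "a \<in> D" for a
  proof -
    obtain U V where UV: "openin Z U" "openin Z V" "ti \<in> U" "ti \<in> V"
      "\<forall>u\<in>U. \<forall>v\<in>V. cmod (E (liftY Y (H a)) (t a, {t a, u, v}) - E (liftY Y (H a)) (t a, {t a, ti})) < \<epsilon>"
      using E_near[OF liftY_cfun[OF Hc[OF a]] n3 tD[OF a] ti, of \<epsilon>] unfolding \<epsilon>_def by auto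
    define Vh where "Vh = {z \<in> topspace Z. hh a z \<in> {-\<epsilon><..<\<epsilon>}}"
    have Vho: "openin Z Vh" unfolding Vh_def
      using hh[OF a] by (intro openin_continuous_map_preimage) auto
    have tiVh: "ti \<in> Vh" unfolding Vh_def using ti hh[OF a] by (simp add: \<epsilon>_def)
    define F where "F = {d\<in>D. t d \<notin> U} \<union> {d\<in>D. t d \<notin> V} \<union> {d\<in>D. t d \<notin> Vh}"
    have "finite F" unfolding F_def using cof UV Vho tiVh by simp
    moreover have "\<forall>b\<in>D-F. \<forall>c\<in>D-F. cmod (E (liftY Y (H a)) (t a, {t a, t b, t c}) - p a) < \<epsilon>
          \<and> \<bar>hh a (t b)\<bar> < \<epsilon>"
    proof (intro ballI conjI)
      fix b c assume b: "b \<in> D - F" and c: "c \<in> D - F"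
      then have "t b \<in> U" "t c \<in> V" "t b \<in> Vh" unfolding F_def by auto
      then show "cmod (E (liftY Y (H a)) (t a, {t a, t b, t c}) - p a) < \<epsilon>" "\<bar>hh a (t b)\<bar> < \<epsilon>"
        using UV(5) unfolding p_def Vh_def by auto
    qed
    ultimately show ?thesis by blast
  qed
  have "\<forall>a\<in>D. \<exists>F. finite F \<and> (\<forall>b\<in>D - F. \<forall>c\<in>D - F.
       cmod (E (liftY Y (H a)) (t a, {t a, t b, t c}) - p a) < \<epsilon> \<and> \<bar>hh a (t b)\<bar> < \<epsilon>)"
    using ex2 by blast
  then have "\<exists>FF. \<forall>a\<in>D. finite (FF a) \<and> (\<forall>b\<in>D - FF a. \<forall>c\<in>D - FF a.
       cmod (E (liftY Y (H a)) (t a, {t a, t b, t c}) - p a) < \<epsilon> \<and> \<bar>hh a (t b)\<bar> < \<epsilon>)"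
    by (rule bchoice)
  then obtain FF where FF0: "\<forall>a\<in>D. finite (FF a) \<and> (\<forall>b\<in>D - FF a. \<forall>c\<in>D - FF a.
       cmod (E (liftY Y (H a)) (t a, {t a, t b, t c}) - p a) < \<epsilon> \<and> \<bar>hh a (t b)\<bar> < \<epsilon>)"
    by (elim exE)
  have FF: "\<And>a. a \<in> D \<Longrightarrow> finite (FF a)"
    "\<And>a b c. a \<in> D \<Longrightarrow> b \<in> D - FF a \<Longrightarrow> c \<in> D - FF a \<Longrightarrow>
       cmod (E (liftY Y (H a)) (t a, {t a, t b, t c}) - p a) < \<epsilon> \<and> \<bar>hh a (t b)\<bar> < \<epsilon>"
    using FF0 by blast+
  have hs: "\<bar>hh a (t b)\<bar> < \<epsilon>" if "a \<in> D" "b \<in> D" "b \<notin> FF a" for a b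
    using FF(2)[of a b b] that by auto
  have ev: "cmod (E (liftY Y (H a)) (t a, {t a, t b, t c}) - p a) < \<epsilon>"
    if "a \<in> D" "b \<in> D" "c \<in> D" "b \<notin> FF a" "c \<notin> FF a" for a b c
    using FF(2)[of a b c] that by auto
  have inY: "(z, x) \<in> topspace Y" if "x \<in> topspace X" "z \<in> x" for z x
    using that tsX_D(1)[OF that(1)] by (auto simp: tsY)
  have pair: "cmod (p a + p b - 1) \<le> 4 * \<epsilon>" if a: "a \<in> D" and b: "b \<in> D" and ab: "b \<notin> FF a" "a \<notin> FF b" for a b
  proof -
    have x2: "{t a, t b} \<in> topspace X" using triple_in_tsX[OF n3 tD[OF a] tD[OF b] tD[OF b]] by simp
    have e1: "cmod (E (liftY Y (H a)) (t a, {t a, t b}) - p a) < \<epsilon>"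
      using ev[OF a b b ab(1) ab(1)] by simp
    have e2': "cmod (E (liftY Y (H b)) (t b, {t a, t b}) - p b) < \<epsilon>"
      using ev[OF b a a ab(2) ab(2)] by (simp add: insert_commute)
    have "E (liftY Y (H b)) (t b, {t a, t b}) = E (liftY Y (H b)) (t a, {t a, t b})"
      by (rule E_snd[OF liftY_cfun[OF Hc[OF b]]]) (use inY x2 in auto)
    with e2' have e2: "cmod (E (liftY Y (H b)) (t a, {t a, t b}) - p b) < \<epsilon>" by simp
    define k where "k z = complex_of_real (hh a z + hh b z - 1)" for z
    have knorm: "cmod (k z) = \<bar>hh a z + hh b z - 1\<bar>" for z unfolding k_def by (rule norm_of_real)
    have kc: "continuous_map Z euclidean k" unfolding k_def using hh[OF a] hh[OF b]
      by (intro ofreal_cont continuous_map_diff continuous_map_add) auto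
    have klift: "liftY Y k = liftY Y (\<lambda>z. H a z + (H b z + (-1) * 1))"
      unfolding liftY_def k_def H_def by auto
    have pY: "(t a, {t a, t b}) \<in> topspace Y" using inY x2 by auto
    have Ek: "E (liftY Y k) (t a, {t a, t b}) = E (liftY Y (H a)) (t a, {t a, t b}) + (E (liftY Y (H b)) (t a, {t a, t b}) - 1)"
    proof -
      have c1: "continuous_map Z euclidean (\<lambda>z. (-1) * (1::complex))" by simp
      have c2: "continuous_map Z euclidean (\<lambda>z. H b z + (-1) * 1)" by (rule continuous_map_add[OF Hc[OF b] c1])
      have "E (liftY Y (\<lambda>z. H a z + (H b z + (-1) * 1))) (t a, {t a, t b})
          = E (liftY Y (H a)) (t a, {t a, t b}) + E (liftY Y (\<lambda>z. H b z + (-1) * 1)) (t a, {t a, t b})"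
        by (rule E_lift_add[OF Hc[OF a] c2])
      moreover have "E (liftY Y (\<lambda>z. H b z + (-1) * 1)) (t a, {t a, t b})
          = E (liftY Y (H b)) (t a, {t a, t b}) + E (liftY Y (\<lambda>z. (-1) * 1)) (t a, {t a, t b})"
        by (rule E_lift_add[OF Hc[OF b] c1])
      moreover have "E (liftY Y (\<lambda>z. (-1) * 1)) (t a, {t a, t b}) = (-1) * E (liftY Y (\<lambda>z. 1)) (t a, {t a, t b})"
        by (rule E_lift_mult) simp
      ultimately show ?thesis unfolding klift using E_one[OF pY] by simp
    qed
    have "cmod (E (liftY Y k) (t a, {t a, t b})) \<le> 2 * \<epsilon>"
    proof (rule E_local[OF kc, of 3])
      show "\<forall>z\<in>topspace Z. cmod (k z) \<le> 3"
      proof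
        fix z assume z: "z \<in> topspace Z"
        then show "cmod (k z) \<le> 3" using hb[OF a z] hb[OF b z] by (simp add: knorm abs_le_iff)
      qed
      show "\<forall>z\<in>{t a, t b}. cmod (k z) < 2 * \<epsilon>"
        using hh[OF a] hh[OF b] hs[OF a b ab(1)] hs[OF b a ab(2)] by (auto simp: knorm \<epsilon>_def)
    qed (use x2 \<epsilon>_def in auto)
    then have e3: "cmod (E (liftY Y (H a)) (t a, {t a, t b}) + E (liftY Y (H b)) (t a, {t a, t b}) - 1) \<le> 2 * \<epsilon>"
      using Ek by (simp add: algebra_simps)
    have "p a + p b - 1 = (E (liftY Y (H a)) (t a, {t a, t b}) + E (liftY Y (H b)) (t a, {t a, t b}) - 1)
        - (E (liftY Y (H a)) (t a, {t a, t b}) - p a) - (E (liftY Y (H b)) (t a, {t a, t b}) - p b)"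
      by (simp add: algebra_simps)
    also have "cmod \<dots> \<le> 2 * \<epsilon> + \<epsilon> + \<epsilon>"
      using e1 e2 e3 by (smt (verit) norm_triangle_ineq4)
    finally show ?thesis by simp
  qed
  obtain a b c where abc: "a \<in> D" "b \<in> D" "c \<in> D" "a \<noteq> b" "a \<noteq> c" "b \<noteq> c"
    "b \<notin> FF a" "c \<notin> FF a" "a \<notin> FF b" "c \<notin> FF b" "a \<notin> FF c" "b \<notin> FF c"
    using free_triple[of D FF, OF D FF(1)] by blast
  have triple: "cmod (p a + p b + p c - 1) \<le> 5 * \<epsilon>"
  proof -
    let ?x = "{t a, t b, t c}"
    have x3: "?x \<in> topspace X" using triple_in_tsX[OF n3 tD[OF abc(1)] tD[OF abc(2)] tD[OF abc(3)]] .
    have pY: "(t a, ?x) \<in> topspace Y" using inY x3 by auto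
    have e1: "cmod (E (liftY Y (H a)) (t a, ?x) - p a) < \<epsilon>"
      using ev[OF abc(1,2,3,7,8)] by simp
    have e2': "cmod (E (liftY Y (H b)) (t b, ?x) - p b) < \<epsilon>"
      using ev[OF abc(2,1,3,9,10)] by (simp add: insert_commute)
    have "E (liftY Y (H b)) (t b, ?x) = E (liftY Y (H b)) (t a, ?x)"
      by (rule E_snd[OF liftY_cfun[OF Hc[OF abc(2)]]]) (use inY x3 in auto)
    with e2' have e2: "cmod (E (liftY Y (H b)) (t a, ?x) - p b) < \<epsilon>" by simp
    have e3': "cmod (E (liftY Y (H c)) (t c, ?x) - p c) < \<epsilon>"
      using ev[OF abc(3,1,2,11,12)] by (simp add: insert_commute)
    have "E (liftY Y (H c)) (t c, ?x) = E (liftY Y (H c)) (t a, ?x)"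
      by (rule E_snd[OF liftY_cfun[OF Hc[OF abc(3)]]]) (use inY x3 in auto)
    with e3' have e3: "cmod (E (liftY Y (H c)) (t a, ?x) - p c) < \<epsilon>" by simp
    define k where "k z = complex_of_real (hh a z + hh b z + hh c z - 1)" for z
    have knorm: "cmod (k z) = \<bar>hh a z + hh b z + hh c z - 1\<bar>" for z unfolding k_def by (rule norm_of_real)
    have kc: "continuous_map Z euclidean k" unfolding k_def using hh[OF abc(1)] hh[OF abc(2)] hh[OF abc(3)]
      by (intro ofreal_cont continuous_map_diff continuous_map_add) auto
    have klift: "liftY Y k = liftY Y (\<lambda>z. H a z + (H b z + (H c z + (-1) * 1)))"
      unfolding liftY_def k_def H_def by auto
    have Ek: "E (liftY Y k) (t a, ?x) = E (liftY Y (H a)) (t a, ?x) + (E (liftY Y (H b)) (t a, ?x)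
       + (E (liftY Y (H c)) (t a, ?x) - 1))"
    proof -
      have c1: "continuous_map Z euclidean (\<lambda>z. (-1) * (1::complex))" by simp
      have c2: "continuous_map Z euclidean (\<lambda>z. H c z + (-1) * 1)" by (rule continuous_map_add[OF Hc[OF abc(3)] c1])
      have c3: "continuous_map Z euclidean (\<lambda>z. H b z + (H c z + (-1) * 1))" by (rule continuous_map_add[OF Hc[OF abc(2)] c2])
      have "E (liftY Y (\<lambda>z. H a z + (H b z + (H c z + (-1) * 1)))) (t a, ?x)
          = E (liftY Y (H a)) (t a, ?x) + E (liftY Y (\<lambda>z. H b z + (H c z + (-1) * 1))) (t a, ?x)"
        by (rule E_lift_add[OF Hc[OF abc(1)] c3])
      moreover have "E (liftY Y (\<lambda>z. H b z + (H c z + (-1) * 1))) (t a, ?x)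
          = E (liftY Y (H b)) (t a, ?x) + E (liftY Y (\<lambda>z. H c z + (-1) * 1)) (t a, ?x)"
        by (rule E_lift_add[OF Hc[OF abc(2)] c2])
      moreover have "E (liftY Y (\<lambda>z. H c z + (-1) * 1)) (t a, ?x)
          = E (liftY Y (H c)) (t a, ?x) + E (liftY Y (\<lambda>z. (-1) * 1)) (t a, ?x)"
        by (rule E_lift_add[OF Hc[OF abc(3)] c1])
      moreover have "E (liftY Y (\<lambda>z. (-1) * 1)) (t a, ?x) = (-1) * E (liftY Y (\<lambda>z. 1)) (t a, ?x)"
        by (rule E_lift_mult) simp
      ultimately show ?thesis unfolding klift using E_one[OF pY] by simp
    qed
    have "cmod (E (liftY Y k) (t a, ?x)) \<le> 2 * \<epsilon>"
    proof (rule E_local[OF kc, of 4])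
      show "\<forall>z\<in>topspace Z. cmod (k z) \<le> 4"
      proof
        fix z assume z: "z \<in> topspace Z"
        then show "cmod (k z) \<le> 4" using hb[OF abc(1) z] hb[OF abc(2) z] hb[OF abc(3) z] by (simp add: knorm abs_le_iff)
      qed
      have "\<bar>hh b (t a)\<bar> < \<epsilon>" "\<bar>hh c (t a)\<bar> < \<epsilon>" "\<bar>hh a (t b)\<bar> < \<epsilon>" "\<bar>hh c (t b)\<bar> < \<epsilon>"
        "\<bar>hh a (t c)\<bar> < \<epsilon>" "\<bar>hh b (t c)\<bar> < \<epsilon>"
        using hs abc by auto
      then show "\<forall>z\<in>?x. cmod (k z) < 2 * \<epsilon>"
        using hh[OF abc(1)] hh[OF abc(2)] hh[OF abc(3)] by (auto simp: knorm)
    qed (use x3 \<epsilon>_def in auto)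
    then have e4: "cmod (E (liftY Y (H a)) (t a, ?x) + E (liftY Y (H b)) (t a, ?x) + E (liftY Y (H c)) (t a, ?x) - 1) \<le> 2 * \<epsilon>"
      using Ek by (simp add: algebra_simps)
    have "p a + p b + p c - 1 = (E (liftY Y (H a)) (t a, ?x) + E (liftY Y (H b)) (t a, ?x) + E (liftY Y (H c)) (t a, ?x) - 1)
        - (E (liftY Y (H a)) (t a, ?x) - p a) - (E (liftY Y (H b)) (t a, ?x) - p b) - (E (liftY Y (H c)) (t a, ?x) - p c)"
      by (simp add: algebra_simps)
    also have "cmod \<dots> \<le> 2 * \<epsilon> + \<epsilon> + \<epsilon> + \<epsilon>"
      using e1 e2 e3 e4 by (smt (verit) norm_triangle_ineq4)
    finally show ?thesis by simp
  qed
  have P1: "cmod (p a + p b - 1) \<le> 4 * \<epsilon>" using pair abc by blast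
  have P2: "cmod (p b + p c - 1) \<le> 4 * \<epsilon>" using pair abc by blast
  have P3: "cmod (p a + p c - 1) \<le> 4 * \<epsilon>" using pair abc by blast
  have "(1::complex) = 2 * (p a + p b + p c - 1) - ((p a + p b - 1) + (p b + p c - 1) + (p a + p c - 1))"
    by (simp add: algebra_simps)
  then have "cmod (1::complex) = cmod (2 * (p a + p b + p c - 1) - ((p a + p b - 1) + (p b + p c - 1) + (p a + p c - 1)))"
    by simp
  also have "\<dots> \<le> cmod (2 * (p a + p b + p c - 1)) + cmod ((p a + p b - 1) + (p b + p c - 1) + (p a + p c - 1))"
    by (rule norm_triangle_ineq4)
  also have "cmod ((p a + p b - 1) + (p b + p c - 1) + (p a + p c - 1))
      \<le> cmod (p a + p b - 1) + cmod (p b + p c - 1) + cmod (p a + p c - 1)"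
    by (meson add_mono norm_triangle_ineq order_trans order_refl)
  also have "cmod (2 * (p a + p b + p c - 1)) = 2 * cmod (p a + p b + p c - 1)"
    by (simp only: norm_mult) simp
  finally have "cmod (1::complex) \<le> 2 * cmod (p a + p b + p c - 1) + (cmod (p a + p b - 1) + cmod (p b + p c - 1) + cmod (p a + p c - 1))"
    by simp
  then have "cmod (1::complex) \<le> 4 * \<epsilon> + 4 * \<epsilon> + 4 * \<epsilon> + 2 * (5 * \<epsilon>)"
    using P1 P2 P3 triple by linarith
  then show False by (simp add: \<epsilon>_def)
qed

end



lemma openin_onepoint:
  "openin (onepoint_discrete D) U \<longleftrightarrow> U \<subseteq> insert None (Some ` D) \<and> (None \<in> U \<longrightarrow> finite {d \<in> D. Some d \<notin> U})"
  unfolding onepoint_discrete_def by (simp add: topology_inverse' istopology_onepoint_discrete)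

lemma topspace_onepoint: "topspace (onepoint_discrete D) = insert None (Some ` D)"
proof -
  have "{d \<in> D. Some d \<notin> insert None (Some ` D)} = {}" by auto
  then have "openin (onepoint_discrete D) (insert None (Some ` D))"
    unfolding openin_onepoint by (metis finite.emptyI order_refl)
  moreover have "\<And>U. openin (onepoint_discrete D) U \<Longrightarrow> U \<subseteq> insert None (Some ` D)"
    unfolding openin_onepoint by blast
  ultimately show ?thesis
    by (meson openin_subset openin_topspace subset_antisym)
qed

theorem mainTheorem2:
  fixes Z :: "'a topology" and D :: "'d set" and n :: nat
  assumes "compact_space Z" and "Hausdorff_space Z"
    and "uncountable D"
    and "\<exists>S. S \<subseteq> topspace Z \<and> subtopology Z S homeomorphic_space onepoint_discrete D"
    and "n \<ge> 3"
  shows "\<not> (\<exists>E. cond_exp (incl_top Z n) (pullback_alg (incl_top Z n) (fin_subsets_top Z n) snd) E)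
         \<and> \<not> quantum_branched_cover (incl_top Z n) (pullback_alg (incl_top Z n) (fin_subsets_top Z n) snd)"
proof -
  obtain S where S: "S \<subseteq> topspace Z" "subtopology Z S homeomorphic_space onepoint_discrete D"
    using assms(4) by blast
  then have "onepoint_discrete D homeomorphic_space subtopology Z S"
    using homeomorphic_space_sym by blast
  then obtain e e' where ee: "homeomorphic_maps (onepoint_discrete D) (subtopology Z S) e e'"
    unfolding homeomorphic_space_def by blast
  have ec: "continuous_map (onepoint_discrete D) (subtopology Z S) e"
    and inv: "\<And>u. u \<in> topspace (onepoint_discrete D) \<Longrightarrow> e' (e u) = u"
    using ee unfolding homeomorphic_maps_def by auto
  have eZ: "continuous_map (onepoint_discrete D) Z e" using ec continuous_map_in_subtopology by blast
  have eT: "e u \<in> topspace Z" if "u \<in> topspace (onepoint_discrete D)" for u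
    using continuous_map_image_subset_topspace[OF eZ] that by blast
  define t where "t d = e (Some d)" for d
  define ti where "ti = e None"
  have ti: "ti \<in> topspace Z" unfolding ti_def by (rule eT) (simp add: topspace_onepoint)
  have tD: "\<And>d. d \<in> D \<Longrightarrow> t d \<in> topspace Z" unfolding t_def by (rule eT) (simp add: topspace_onepoint)
  have tinj: "inj_on t D"
  proof
    fix x y assume "x \<in> D" "y \<in> D" "t x = t y"
    then have "e' (e (Some x)) = e' (e (Some y))" by (simp add: t_def)
    then show "x = y" using inv \<open>x \<in> D\<close> \<open>y \<in> D\<close> by (simp add: topspace_onepoint)
  qed
  have tne: "\<And>d. d \<in> D \<Longrightarrow> t d \<noteq> ti"
  proof
    fix d assume "d \<in> D" "t d = ti"
    then have "e' (e (Some d)) = e' (e None)" by (simp add: t_def ti_def)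
    then show False using inv \<open>d \<in> D\<close> by (simp add: topspace_onepoint)
  qed
  have cof: "finite {d\<in>D. t d \<notin> V}" if V: "openin Z V" "ti \<in> V" for V
  proof -
    have "openin (onepoint_discrete D) {u \<in> topspace (onepoint_discrete D). e u \<in> V}"
      by (rule openin_continuous_map_preimage[OF eZ V(1)])
    moreover have "None \<in> {u \<in> topspace (onepoint_discrete D). e u \<in> V}"
      using V(2) by (simp add: ti_def topspace_onepoint)
    ultimately have "finite {d \<in> D. Some d \<notin> {u \<in> topspace (onepoint_discrete D). e u \<in> V}}"
      unfolding openin_onepoint by blast
    moreover have "{d \<in> D. Some d \<notin> {u \<in> topspace (onepoint_discrete D). e u \<in> V}} = {d\<in>D. t d \<notin> V}"
      by (auto simp: t_def topspace_onepoint)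
    ultimately show ?thesis by simp
  qed
  have noCE: "\<not> (\<exists>E. cond_exp (incl_top Z n) (pullback_alg (incl_top Z n) (fin_subsets_top Z n) snd) E)"
  proof
    assume "\<exists>E. cond_exp (incl_top Z n) (pullback_alg (incl_top Z n) (fin_subsets_top Z n) snd) E"
    then obtain E where E: "cond_exp (incl_top Z n) (pullback_alg (incl_top Z n) (fin_subsets_top Z n) snd) E"
      by blast
    interpret ce Z n E
      using assms(1,5) E by unfold_locales auto
    show False
      by (rule no_CE[OF assms(5) assms(2) assms(3) ti tD tinj tne cof])
  qed
  moreover have "\<not> quantum_branched_cover (incl_top Z n) (pullback_alg (incl_top Z n) (fin_subsets_top Z n) snd)"
    using noCE unfolding quantum_branched_cover_def by blast
  ultimately show ?thesis by blast
qed


end
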